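(* For the $3\times3$ absorbing game \[ A=\begin{bmatrix}1^* & 1^* & 2^*\\ 1^* & 2^* & 0\\ 2^* & 0 & 1^*\end{bmatrix}, \] let \[ \alpha=-1+\frac13\sqrt[3]{\frac{27}{2}-\frac{3\sqrt{69}}{2}}+\frac{\sqrt[3]{\tfrac12(9+\sqrt{69})}}{\sqrt[3]{9}}\approx0.3247, \] and let $x=(x^1,x^2,x^3)=(\alpha,\,1-2\alpha-\alpha^2,\,\alpha+\alpha^2)\in\Delta(\{1,2,3\})$. Then $x$ is the unique $x\in\Delta(\{1,2,3\})$ satisfying \[ x^1+x^2+2x^3=\frac{x^1+2x^2}{x^1+x^2}=\frac{2x^1+x^3}{x^1+x^3}, \] and for every column $j\in\{1,2,3\}$, $\lim_{\lambda\to0}\gamma_\lambda(x,j)=1+\alpha+\alpha^2$, where $\gamma_\lambda(x,j)$ is the $\lambda$-discounted payoff when Player 1 plays the stationary strategy $x$ and Player 2 plays the pure stationary action $j$. Consequently the limit value is $v=1+\alpha+\alpha^2$. *)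

theory Defs
  imports "HOL-Analysis.Analysis"
begin

definition mixed_actions :: "nat set \<Rightarrow> (nat \<Rightarrow> real) set" where
  "mixed_actions I = {x. (\<forall>i\<in>I. 0 \<le> x i) \<and> (\<forall>i. i \<notin> I \<longrightarrow> x i = 0) \<and> (\<Sum>i\<in>I. x i) = 1}"

definition pure :: "nat \<Rightarrow> nat \<Rightarrow> real" where
  "pure j = (\<lambda>k. if k = j then 1 else 0)"

text \<open>An absorbing game with action sets I (Player 1) and J (Player 2), payoff g and
absorbing-entry predicate ab (entries marked with a star).\<close>
definition abs_prob :: "nat set \<Rightarrow> nat set \<Rightarrow> (nat \<Rightarrow> nat \<Rightarrow> bool) \<Rightarrow>
    (nat \<Rightarrow> real) \<Rightarrow> (nat \<Rightarrow> real) \<Rightarrow> real" where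
  "abs_prob I J ab x y = (\<Sum>i\<in>I. \<Sum>j\<in>J. if ab i j then x i * y j else 0)"

text \<open>Expected payoff at stage n+1 (n = 0,1,...) under stationary x, y:
 with probability (1-p)^n play has not been absorbed and the current stage payoff is the
 expected one-shot payoff; with probability (1-p)^s x_i y_j it was absorbed at stage s+1 <= n
 in absorbing entry (i,j), giving payoff g i j forever.\<close>
definition stage_payoff :: "nat set \<Rightarrow> nat set \<Rightarrow> (nat \<Rightarrow> nat \<Rightarrow> real) \<Rightarrow> (nat \<Rightarrow> nat \<Rightarrow> bool) \<Rightarrow>
    (nat \<Rightarrow> real) \<Rightarrow> (nat \<Rightarrow> real) \<Rightarrow> nat \<Rightarrow> real" where
  "stage_payoff I J g ab x y n =
     (let p = abs_prob I J ab x y in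
      (1 - p) ^ n * (\<Sum>i\<in>I. \<Sum>j\<in>J. x i * y j * g i j)
      + (\<Sum>s<n. (1 - p) ^ s * (\<Sum>i\<in>I. \<Sum>j\<in>J. if ab i j then x i * y j * g i j else 0)))"

definition disc_payoff :: "nat set \<Rightarrow> nat set \<Rightarrow> (nat \<Rightarrow> nat \<Rightarrow> real) \<Rightarrow> (nat \<Rightarrow> nat \<Rightarrow> bool) \<Rightarrow>
    real \<Rightarrow> (nat \<Rightarrow> real) \<Rightarrow> (nat \<Rightarrow> real) \<Rightarrow> real" where
  "disc_payoff I J g ab l x y = (\<Sum>n. l * (1 - l) ^ n * stage_payoff I J g ab x y n)"

text \<open>By Shapley's theorem both players have stationary optimal
strategies, and against a stationary strategy a best reply may be taken stationary, so the
value equals sup over stationary x of inf over stationary y of the discounted payoff.\<close>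
definition disc_value :: "nat set \<Rightarrow> nat set \<Rightarrow> (nat \<Rightarrow> nat \<Rightarrow> real) \<Rightarrow> (nat \<Rightarrow> nat \<Rightarrow> bool) \<Rightarrow>
    real \<Rightarrow> real" where
  "disc_value I J g ab l =
     (SUP x\<in>mixed_actions I. INF y\<in>mixed_actions J. disc_payoff I J g ab l x y)"

text \<open>The concrete 3x3 game: [[1*,1*,2*],[1*,2*,0],[2*,0,1*]].\<close>
definition gA :: "nat \<Rightarrow> nat \<Rightarrow> real" where
  "gA i j = (if (i, j) \<in> {(1,3), (2,2), (3,1)} then 2
             else if (i, j) \<in> {(2,3), (3,2)} then 0 else 1)"

definition abA :: "nat \<Rightarrow> nat \<Rightarrow> bool" where
  "abA i j = ((i, j) \<notin> {(2,3), (3,2)})"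

definition alphaA :: real where
  "alphaA = -1 + root 3 (27/2 - 3 * sqrt 69 / 2) / 3 + root 3 ((9 + sqrt 69) / 2) / root 3 9"

end

theory Submission
  imports Defs
begin

lemma alpha_cubic: "alphaA^3 + 3*alphaA^2 + 2*alphaA - 1 = 0"
proof -
  define sq where "sq = sqrt (69::real)"
  have s2: "sq^2 = 69" by (simp add: sq_def)
  define u :: real where "u = (27 - 3 * sq) / 2"
  define w :: real where "w = (9 + sq) / 2"
  define ra where "ra = root 3 u"
  define rb where "rb = root 3 w"
  define r9 where "r9 = root 3 (9::real)"
  have ra3: "ra^3 = u" unfolding ra_def by (simp add: odd_real_root_pow)
  have rb3: "rb^3 = w" unfolding rb_def by (simp add: odd_real_root_pow)
  have r93: "r9^3 = 9" unfolding r9_def by (simp add: odd_real_root_pow)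
  have r9p: "r9 > 0" unfolding r9_def by simp
  have uw: "u*w = 9" using s2 unfolding u_def w_def by (simp add: algebra_simps power2_eq_square)
  have "ra*rb = r9" unfolding ra_def rb_def r9_def by (simp add: real_root_mult[symmetric] uw)
  define a where "a = ra/3"
  define b where "b = rb/r9"
  have a3: "a^3 = u/27" unfolding a_def by (simp add: power_divide ra3)
  have b3: "b^3 = w/9" unfolding b_def by (simp add: power_divide rb3 r93)
  have ab: "a*b = 1/3" unfolding a_def b_def using \<open>ra*rb = r9\<close> r9p by (simp add: field_simps)
  have al: "alphaA = -1 + a + b" unfolding alphaA_def a_def b_def ra_def rb_def r9_def u_def w_def sq_def by simp
  have t3: "(a+b)^3 = (a+b) + 1"
  proof -
    have "(a+b)^3 = a^3 + b^3 + 3*(a*b)*(a+b)" by (simp add: power3_eq_cube algebra_simps)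
    also have "\<dots> = u/27 + w/9 + (a+b)" unfolding a3 b3 ab by simp
    also have "u/27 + w/9 = 1" unfolding u_def w_def by (simp add: field_simps)
    finally show ?thesis by simp
  qed
  show ?thesis using t3 unfolding al by algebra
qed

lemma alpha_bounds: "0.32 < alphaA \<and> alphaA < 0.33"
proof -
  define t where "t = 1 + alphaA"
  have "t^3 = t + 1" using alpha_cubic unfolding t_def by algebra
  have q1: "t^2 + 1.32*t + 0.7424 > 0" using zero_le_power2[of "t + 0.66"] by (simp add: power2_eq_square algebra_simps)
  have q2: "t^2 + 1.33*t + 0.7689 > 0" using zero_le_power2[of "t + 0.665"] by (simp add: power2_eq_square algebra_simps)
  have e1: "(t - 1.32) * (t^2 + 1.32*t + 0.7424) = 0.020032" using \<open>t^3 = t + 1\<close>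
    by algebra
  have e2: "(t - 1.33) * (t^2 + 1.33*t + 0.7689) = -0.022637" using \<open>t^3 = t + 1\<close>
    by algebra
  have "0 < (t - 1.32) * (t^2 + 1.32*t + 0.7424)" using e1 by simp
  hence "1.32 < t" using q1 by (simp add: zero_less_mult_iff)
  moreover have "(t - 1.33) * (t^2 + 1.33*t + 0.7689) < 0" using e2 by simp
  hence "t < 1.33" using q2 by (simp add: mult_less_0_iff)
  ultimately have "1.32 < t \<and> t < 1.33" by simp
  then show ?thesis unfolding t_def by simp
qed


lemma series_rec:
  fixes f :: "nat \<Rightarrow> real"
  assumes rec: "\<And>n. f (Suc n) = c * f n + q" and bnd: "\<And>n. \<bar>f n\<bar> \<le> B"
    and l: "0 < l" "l < 1" and c: "0 \<le> c" "c \<le> 1"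
  shows "(\<Sum>n. l * (1-l)^n * f n) = (l * f 0 + (1-l) * q) / (1 - (1-l)*c)"
proof -
  define g where "g = (\<lambda>n. l * (1-l)^n * f n)"
  have geo: "summable (\<lambda>n. (1-l)^n)" using l by (intro summable_geometric) auto
  have sg: "summable g"
  proof (rule summable_comparison_test')
    show "summable (\<lambda>n. (l*B) * (1-l)^n)" using geo by (rule summable_mult)
    fix n :: nat
    have "norm (g n) = l * (1-l)^n * \<bar>f n\<bar>" unfolding g_def using l by (simp add: abs_mult)
    also have "\<dots> \<le> l * (1-l)^n * B" using bnd[of n] l by (intro mult_left_mono) auto
    finally show "norm (g n) \<le> (l*B) * (1-l)^n" by (simp add: algebra_simps)
  qed
  define S where "S = suminf g"
  have gs: "(\<lambda>n. (1-l)^n) sums (1/l)" using geometric_sums[of "1-l"] l by simp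
  have "(\<lambda>n. (1-l)*c * g n + ((1-l)*q*l) * (1-l)^n) sums ((1-l)*c*S + ((1-l)*q*l) * (1/l))"
    by (intro sums_add sums_mult gs) (simp add: S_def summable_sums[OF sg])
  moreover have "(\<lambda>n. g (Suc n)) = (\<lambda>n. (1-l)*c * g n + ((1-l)*q*l) * (1-l)^n)"
    unfolding g_def by (auto simp: rec algebra_simps)
  ultimately have "(\<lambda>n. g (Suc n)) sums ((1-l)*c*S + (1-l)*q)" using l by simp
  hence "(\<Sum>n. g (Suc n)) = (1-l)*c*S + (1-l)*q" by (rule sums_unique[symmetric])
  hence eq: "S - l * f 0 = (1-l)*c*S + (1-l)*q" using suminf_split_head[OF sg] unfolding S_def g_def by simp
  have pos: "0 < 1 - (1-l)*c"
  proof -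
    have "(1-l)*c \<le> 1 - l" using mult_left_mono[of c 1 "1-l"] l c by simp
    thus ?thesis using l by linarith
  qed
  from eq have "S * (1 - (1-l)*c) = l * f 0 + (1-l)*q" by (simp add: algebra_simps)
  hence "S = (l * f 0 + (1-l) * q) / (1 - (1-l)*c)" using pos by (simp add: field_simps)
  thus ?thesis unfolding S_def g_def .
qed

lemma geo_step:
  fixes c R Q :: real
  shows "c^(Suc n) * R + (\<Sum>s<Suc n. c^s * Q) = c * (c^n * R + (\<Sum>s<n. c^s * Q)) + Q"
  by (simp only: sum.lessThan_Suc_shift sum_distrib_left) (simp add: algebra_simps sum_distrib_left)

lemma stage_rec:
  "stage_payoff I J g ab x y (Suc n) = (1 - abs_prob I J ab x y) * stage_payoff I J g ab x y n
     + (\<Sum>i\<in>I. \<Sum>j\<in>J. if ab i j then x i * y j * g i j else 0)"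
  unfolding stage_payoff_def Let_def by (rule geo_step)

lemma stage0: "stage_payoff I J g ab x y 0 = (\<Sum>i\<in>I. \<Sum>j\<in>J. x i * y j * g i j)"
  unfolding stage_payoff_def Let_def by simp

definition PA :: "(nat \<Rightarrow> real) \<Rightarrow> (nat \<Rightarrow> real) \<Rightarrow> real" where
  "PA x y = x 1*y 1 + x 1*y 2 + x 1*y 3 + x 2*y 1 + x 2*y 2 + x 3*y 1 + x 3*y 3"
definition RA :: "(nat \<Rightarrow> real) \<Rightarrow> (nat \<Rightarrow> real) \<Rightarrow> real" where
  "RA x y = x 1*y 1 + x 1*y 2 + 2*x 1*y 3 + x 2*y 1 + 2*x 2*y 2 + 2*x 3*y 1 + x 3*y 3"

lemma absA: "abs_prob {1,2,3} {1,2,3} abA x y = PA x y"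
  by (simp add: abs_prob_def abA_def PA_def)
lemma rA: "(\<Sum>i\<in>{1,2,3}. \<Sum>j\<in>{1,2,3}. x i * y j * gA i j) = RA x y"
  by (simp add: gA_def RA_def)
lemma qA: "(\<Sum>i\<in>{1,2,3}. \<Sum>j\<in>{1,2,3::nat}. if abA i j then x i * y j * gA i j else 0) = RA x y"
  by (simp add: gA_def abA_def RA_def)

lemma mixed_unfold: "x \<in> mixed_actions {1,2,3} \<longleftrightarrow>
   0 \<le> x 1 \<and> 0 \<le> x 2 \<and> 0 \<le> x 3 \<and> (\<forall>i. i \<notin> {1,2,3} \<longrightarrow> x i = 0) \<and> x 1 + x 2 + x 3 = 1"
  by (simp add: mixed_actions_def add.assoc)

lemma PR_bounds:
  assumes "x \<in> mixed_actions {1,2,3}" "y \<in> mixed_actions {1,2,3}"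
  shows "0 \<le> PA x y \<and> PA x y \<le> 1 \<and> 0 \<le> RA x y \<and> RA x y \<le> 2 * PA x y \<and> RA x y \<le> 2"
proof -
  have x: "0 \<le> x 1" "0 \<le> x 2" "0 \<le> x 3" "x 1 + x 2 + x 3 = 1" using assms(1) unfolding mixed_unfold by auto
  have y: "0 \<le> y 1" "0 \<le> y 2" "0 \<le> y 3" "y 1 + y 2 + y 3 = 1" using assms(2) unfolding mixed_unfold by auto
  have prod: "(x 1 + x 2 + x 3) * (y 1 + y 2 + y 3) = 1" using x y by simp
  have nn: "0 \<le> x i * y j" if "i \<in> {1,2,3}" "j \<in> {1,2,3::nat}" for i j
    using that x y by auto
  have nn': "0 \<le> x 1 * y 1" "0 \<le> x 1 * y 2" "0 \<le> x 1 * y 3" "0 \<le> x 2 * y 1" "0 \<le> x 2 * y 2"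
     "0 \<le> x 2 * y 3" "0 \<le> x 3 * y 1" "0 \<le> x 3 * y 2" "0 \<le> x 3 * y 3" using nn by auto
  show ?thesis using prod nn' unfolding PA_def RA_def by (simp add: algebra_simps)
qed

lemma disc_formula:
  assumes "x \<in> mixed_actions {1,2,3}" "y \<in> mixed_actions {1,2,3}" "0 < l" "l < 1"
  shows "disc_payoff {1,2,3} {1,2,3} gA abA l x y = RA x y / (l + (1-l) * PA x y)"
proof -
  define f where "f = stage_payoff {1,2,3} {1,2,3} gA abA x y"
  have b: "0 \<le> PA x y \<and> PA x y \<le> 1 \<and> 0 \<le> RA x y \<and> RA x y \<le> 2 * PA x y \<and> RA x y \<le> 2"
    using PR_bounds[OF assms(1,2)] .
  have rec: "f (Suc n) = (1 - PA x y) * f n + RA x y" for n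
    unfolding f_def using stage_rec[of "{1,2,3}" "{1,2,3}" gA abA x y n] unfolding absA qA by simp
  have f0: "f 0 = RA x y" unfolding f_def stage0 rA ..
  have fb: "0 \<le> f n \<and> f n \<le> 2" for n
  proof (induction n)
    case 0 then show ?case using b f0 by simp
  next
    case (Suc n)
    have "(1 - PA x y) * f n \<le> (1 - PA x y) * 2" using Suc b by (intro mult_left_mono) auto
    moreover have "0 \<le> (1 - PA x y) * f n" using Suc b by simp
    ultimately show ?case using rec[of n] b by (simp add: algebra_simps)
  qed
  have "(\<Sum>n. l * (1-l)^n * f n) = (l * f 0 + (1-l) * RA x y) / (1 - (1-l)*(1 - PA x y))"
    by (rule series_rec[where B=2]) (use rec fb assms b in auto)
  also have "\<dots> = RA x y / (l + (1-l) * PA x y)" using f0 by (simp add: algebra_simps)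
  finally show ?thesis unfolding disc_payoff_def f_def .
qed


lemma den_pos: "0 < l \<Longrightarrow> l < 1 \<Longrightarrow> 0 \<le> (P::real) \<Longrightarrow> 0 < l + (1-l)*P"
  by (simp add: add_pos_nonneg)

lemma frac_mono:
  fixes l a P v :: real
  assumes "0 < l" "l < 1" "0 < a" "a \<le> P" "0 \<le> v"
  shows "v * a/(l+(1-l)*a) \<le> v * P/(l+(1-l)*P)"
proof -
  have A: "0 < l+(1-l)*a" and B: "0 < l+(1-l)*P" using assms den_pos by auto
  have e: "v * a*(l+(1-l)*P) - v * P*(l+(1-l)*a) = v * l*(a-P)" by (simp add: algebra_simps)
  have "v * l*(a-P) \<le> 0" using assms by (intro mult_nonneg_nonpos) auto
  hence "v * a*(l+(1-l)*P) \<le> v * P*(l+(1-l)*a)" using e by linarith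
  thus ?thesis using A B by (simp add: divide_simps)
qed

lemma lim_aux:
  fixes P v :: real
  assumes "0 < P"
  shows "((\<lambda>l. v * P/(l+(1-l)*P)) \<longlongrightarrow> v) (at_right 0)"
proof -
  have "((\<lambda>l. v * P/(l+(1-l)*P)) \<longlongrightarrow> v * P/(0+(1-0)*P)) (at_right 0)"
    using assms by (intro tendsto_intros) auto
  thus ?thesis using assms by simp
qed

lemma cubic_unique:
  fixes s t :: real
  assumes "s^3 - 2* s^2 + 3* s - 1 = 0" "t^3 - 2*t^2 + 3*t - 1 = 0"
  shows "s = t"
proof -
  have f: "(s - t) * (s^2 + s*t + t^2 - 2* s - 2*t + 3) = 0" using assms by algebra
  have "s^2 + s*t + t^2 - 2* s - 2*t + 3 = (3/4)*(s+t-4/3)^2 + (1/4)*(s-t)^2 + 5/3"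
    by (simp add: power2_eq_square algebra_simps)
  also have "\<dots> > 0" by (intro add_nonneg_pos) auto
  finally show ?thesis using f by simp
qed

lemma upper_bound:
  fixes x :: "nat \<Rightarrow> real" and \<sigma> l :: real
  assumes x: "x \<in> mixed_actions {1,2,3}" and l: "0 < l" "l < 1"
    and sig: "\<sigma>^3 - 2*\<sigma>^2 + 3*\<sigma> - 1 = 0" "0 < \<sigma>" "\<sigma> < 1"
  shows "\<exists>j\<in>{1,2,3}. RA x (pure j) / (l + (1-l) * PA x (pure j)) \<le> 1 + \<sigma>"
proof (rule ccontr)
  assume "\<not> ?thesis"
  hence h: "RA x (pure j) / (l + (1-l) * PA x (pure j)) > 1 + \<sigma>" if "j \<in> {1,2,3}" for j
    using that by force
  have xs: "0 \<le> x 1" "0 \<le> x 2" "0 \<le> x 3" "x 1 + x 2 + x 3 = 1" using x unfolding mixed_unfold by auto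
  have P1: "PA x (pure 1) = 1" "RA x (pure 1) = 1 + x 3" using xs by (simp_all add: PA_def RA_def pure_def)
  have P2: "PA x (pure 2) = x 1 + x 2" "RA x (pure 2) = x 1 + 2 * x 2" by (simp_all add: PA_def RA_def pure_def)
  have P3: "PA x (pure 3) = x 1 + x 3" "RA x (pure 3) = 2 * x 1 + x 3" by (simp_all add: PA_def RA_def pure_def)
  have c1: "x 3 > \<sigma>" using h[of 1] P1 by simp
  have c2: "x 2 > \<sigma> * (1 - x 3)"
  proof -
    have D: "0 < l + (1-l)*(x 1 + x 2)" using den_pos l xs by simp
    have "x 1 + 2 * x 2 > (1+\<sigma>) * (l + (1-l)*(x 1 + x 2))" using h[of 2] P2 D by (simp add: pos_less_divide_eq)
    moreover have "(1+\<sigma>) * (l + (1-l)*(x 1 + x 2)) \<ge> (1+\<sigma>) * (x 1 + x 2)"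
    proof (rule mult_left_mono)
      have "l * (1 - (x 1 + x 2)) \<ge> 0" using l xs by simp
      thus "l + (1-l)*(x 1 + x 2) \<ge> x 1 + x 2" by (simp add: algebra_simps)
    qed (use sig in simp)
    ultimately have "x 1 + 2 * x 2 > (1+\<sigma>) * (x 1 + x 2)" by linarith
    hence "x 2 > \<sigma> * (x 1 + x 2)" by (simp add: algebra_simps)
    moreover have "1 - x 3 = x 1 + x 2" using xs by linarith
    ultimately show ?thesis by simp
  qed
  have c3: "x 1 > \<sigma> * (1 - x 2)"
  proof -
    have D: "0 < l + (1-l)*(x 1 + x 3)" using den_pos l xs by simp
    have "2 * x 1 + x 3 > (1+\<sigma>) * (l + (1-l)*(x 1 + x 3))" using h[of 3] P3 D by (simp add: pos_less_divide_eq)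
    moreover have "(1+\<sigma>) * (l + (1-l)*(x 1 + x 3)) \<ge> (1+\<sigma>) * (x 1 + x 3)"
    proof (rule mult_left_mono)
      have "l * (1 - (x 1 + x 3)) \<ge> 0" using l xs by simp
      thus "l + (1-l)*(x 1 + x 3) \<ge> x 1 + x 3" by (simp add: algebra_simps)
    qed (use sig in simp)
    ultimately have "2 * x 1 + x 3 > (1+\<sigma>) * (x 1 + x 3)" by linarith
    hence "x 1 > \<sigma> * (x 1 + x 3)" by (simp add: algebra_simps)
    moreover have "1 - x 2 = x 1 + x 3" using xs by linarith
    ultimately show ?thesis by simp
  qed
  have d1: "(1-\<sigma>) * x 2 > (1-\<sigma>) * (\<sigma> * (1 - x 3))" using c2 sig by (intro mult_strict_left_mono) auto
  have q: "1 - \<sigma> + \<sigma>^2 > 0" using sig zero_le_power2[of \<sigma>] by linarith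
  have d2: "x 3 * (1 - \<sigma> + \<sigma>^2) > \<sigma> * (1 - \<sigma> + \<sigma>^2)" using c1 q by (intro mult_strict_right_mono) auto
  have "1 > \<sigma> * (1 - x 2) + x 2 + x 3" using c3 xs by linarith
  have e: "\<sigma> * (1 - \<sigma> + \<sigma>^2) = 1 - 2*\<sigma> + \<sigma>^2" using sig by algebra
  have "\<sigma> * (1 - x 2) + x 2 + x 3 = \<sigma> + (1-\<sigma>) * x 2 + x 3" by (simp add: algebra_simps)
  have "(1-\<sigma>) * (\<sigma> * (1 - x 3)) + x 3 = \<sigma> - \<sigma>^2 + x 3 * (1 - \<sigma> + \<sigma>^2)"
    by (simp add: algebra_simps power2_eq_square)
  show False using d1 d2 e \<open>1 > \<sigma> * (1 - x 2) + x 2 + x 3\<close>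
    \<open>\<sigma> * (1 - x 2) + x 2 + x 3 = \<sigma> + (1-\<sigma>) * x 2 + x 3\<close>
    \<open>(1-\<sigma>) * (\<sigma> * (1 - x 3)) + x 3 = \<sigma> - \<sigma>^2 + x 3 * (1 - \<sigma> + \<sigma>^2)\<close> by linarith
qed

lemma pure_mixed: "j \<in> {1,2,3} \<Longrightarrow> pure j \<in> mixed_actions {1,2,3}"
  unfolding mixed_unfold pure_def by auto

theorem mainTheorem5:
  defines "x \<equiv> (\<lambda>i::nat. if i = 1 then alphaA
                      else if i = 2 then 1 - 2 * alphaA - alphaA ^ 2
                      else if i = 3 then alphaA + alphaA ^ 2 else 0)"
  shows "x \<in> mixed_actions {1,2,3}
    \<and> x 1 + x 2 + 2 * x 3 = (x 1 + 2 * x 2) / (x 1 + x 2)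
    \<and> (x 1 + 2 * x 2) / (x 1 + x 2) = (2 * x 1 + x 3) / (x 1 + x 3)
    \<and> (\<forall>y \<in> mixed_actions {1,2,3}.
          (y 1 + y 2 + 2 * y 3 = (y 1 + 2 * y 2) / (y 1 + y 2)
           \<and> (y 1 + 2 * y 2) / (y 1 + y 2) = (2 * y 1 + y 3) / (y 1 + y 3)) \<longrightarrow> y = x)
    \<and> (\<forall>j \<in> {1,2,3}. ((\<lambda>l. disc_payoff {1,2,3} {1,2,3} gA abA l x (pure j))
           \<longlongrightarrow> 1 + alphaA + alphaA ^ 2) (at_right 0))
    \<and> ((\<lambda>l. disc_value {1,2,3} {1,2,3} gA abA l) \<longlongrightarrow> 1 + alphaA + alphaA ^ 2) (at_right 0)"
proof -
  define a where "a = alphaA"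
  define \<sigma> where "\<sigma> = a + a^2"
  define v where "v = 1 + a + a^2"
  have C: "a^3 + 3*a^2 + 2*a - 1 = 0" unfolding a_def by (rule alpha_cubic)
  have ab: "8/25 < a" "a < 33/100" using alpha_bounds unfolding a_def by auto
  have x1: "x 1 = a" and x2: "x 2 = 1 - 2*a - a^2" and x3: "x 3 = \<sigma>"
    unfolding x_def a_def \<sigma>_def by simp_all
  have x0: "\<forall>i. i \<notin> {1,2,3} \<longrightarrow> x i = 0" unfolding x_def by auto
  have a2: "a^2 < 11/100" using ab power_strict_mono[of a "33/100" 2] by (simp add: power2_eq_square)
  have a2': "0 \<le> a^2" by simp
  have vs: "v = 1 + \<sigma>" unfolding v_def \<sigma>_def by simp
  have sig: "\<sigma>^3 - 2*\<sigma>^2 + 3*\<sigma> - 1 = 0" unfolding \<sigma>_def using C by algebra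
  have sigb: "0 < \<sigma>" "\<sigma> < 1" unfolding \<sigma>_def using ab a2 a2' by linarith+
  have xs: "x 1 + x 2 + x 3 = 1" unfolding x1 x2 x3 \<sigma>_def by simp
  have xpos: "0 < x 1" "0 < x 2" "0 < x 3" unfolding x1 x2 x3 using ab a2 a2' sigb by linarith+
  have xm: "x \<in> mixed_actions {1,2,3}" unfolding mixed_unfold using xs xpos x0 by auto
  have I1: "x 1 + 2 * x 2 = v * (x 1 + x 2)" unfolding x1 x2 v_def using C by algebra
  have I2: "2 * x 1 + x 3 = v * (x 1 + x 3)" unfolding x1 x3 v_def \<sigma>_def using C by algebra
  have I0: "x 1 + x 2 + 2 * x 3 = v" using xs x3 vs by simp
  have n12: "x 1 + x 2 > 0" and n13: "x 1 + x 3 > 0" using xpos by simp_all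
  have part2: "x 1 + x 2 + 2 * x 3 = (x 1 + 2 * x 2) / (x 1 + x 2)" using I0 I1 n12 by simp
  have part3: "(x 1 + 2 * x 2) / (x 1 + x 2) = (2 * x 1 + x 3) / (x 1 + x 3)" using I1 I2 n12 n13 by simp
  have part4: "\<forall>y \<in> mixed_actions {1,2,3}.
          (y 1 + y 2 + 2 * y 3 = (y 1 + 2 * y 2) / (y 1 + y 2)
           \<and> (y 1 + 2 * y 2) / (y 1 + y 2) = (2 * y 1 + y 3) / (y 1 + y 3)) \<longrightarrow> y = x"
  proof (intro ballI impI)
    fix y assume ym: "y \<in> mixed_actions {1,2,3}" and E: "y 1 + y 2 + 2 * y 3 = (y 1 + 2 * y 2) / (y 1 + y 2)
           \<and> (y 1 + 2 * y 2) / (y 1 + y 2) = (2 * y 1 + y 3) / (y 1 + y 3)"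
    have ys: "0 \<le> y 1" "0 \<le> y 2" "0 \<le> y 3" "y 1 + y 2 + y 3 = 1" and y0: "\<forall>i. i \<notin> {1,2,3} \<longrightarrow> y i = 0"
      using ym unfolding mixed_unfold by auto
    have d1: "y 1 + y 2 \<noteq> 0"
    proof
      assume h: "y 1 + y 2 = 0"
      hence "y 1 = 0" "y 2 = 0" "y 3 = 1" using ys by linarith+
      thus False using E by simp
    qed
    have d2: "y 1 + y 3 \<noteq> 0"
    proof
      assume h: "y 1 + y 3 = 0"
      hence "y 1 = 0" "y 3 = 0" "y 2 = 1" using ys by linarith+
      thus False using E by simp
    qed
    define t where "t = y 3"
    have E1: "y 1 + y 2 + 2 * y 3 = (y 1 + 2 * y 2) / (y 1 + y 2)" using E by simp
    have E2: "y 1 + y 2 + 2 * y 3 = (2 * y 1 + y 3) / (y 1 + y 3)" using E by simp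
    have e1: "(y 1 + y 2 + 2 * y 3) * (y 1 + y 2) = y 1 + 2 * y 2" using E1 d1 by (simp add: eq_divide_eq)
    have e2: "(y 1 + y 2 + 2 * y 3) * (y 1 + y 3) = 2 * y 1 + y 3" using E2 d2 by (simp add: eq_divide_eq)
    have "t^3 - 2*t^2 + 3*t - 1 = 0" using e1 e2 ys(4) unfolding t_def by algebra
    hence "t = \<sigma>" using sig by (rule cubic_unique)
    have y2: "y 2 = x 2" using e1 ys(4) \<open>t = \<sigma>\<close> C unfolding t_def x2 \<sigma>_def by algebra
    have y3: "y 3 = x 3" using \<open>t = \<sigma>\<close> x3 unfolding t_def by simp
    have y1: "y 1 = x 1" using ys(4) xs y2 y3 by linarith
    show "y = x"
    proof
      fix i show "y i = x i" using y1 y2 y3 y0 x0 by (cases "i \<in> {1,2,3}") auto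
    qed
  qed
  have RP: "RA x y = v * PA x y" for y
  proof -
    have "RA x y = y 1 * (x 1 + x 2 + 2 * x 3) + y 2 * (x 1 + 2 * x 2) + y 3 * (2 * x 1 + x 3)"
      by (simp add: RA_def algebra_simps)
    also have "\<dots> = v * (y 1 * (x 1 + x 2 + x 3) + y 2 * (x 1 + x 2) + y 3 * (x 1 + x 3))"
      unfolding I0 I1 I2 xs by (simp add: algebra_simps)
    also have "\<dots> = v * PA x y" by (simp add: PA_def algebra_simps)
    finally show ?thesis .
  qed
  have PAlow: "a \<le> PA x y \<and> PA x y \<le> 1" if "y \<in> mixed_actions {1,2,3}" for y
  proof -
    have ys: "0 \<le> y 1" "0 \<le> y 2" "0 \<le> y 3" "y 1 + y 2 + y 3 = 1"
      using that unfolding mixed_unfold by auto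
    have "PA x y = y 1 * (x 1 + x 2 + x 3) + y 2 * (x 1 + x 2) + y 3 * (x 1 + x 3)"
      by (simp add: PA_def algebra_simps)
    moreover have "y 2 * a \<le> y 2 * (x 1 + x 2)" using ys xpos x1 by (intro mult_left_mono) auto
    moreover have "y 3 * a \<le> y 3 * (x 1 + x 3)" using ys xpos x1 by (intro mult_left_mono) auto
    moreover have "y 1 * a \<le> y 1 * 1" using ys ab by (intro mult_left_mono) auto
    moreover have "y 2 * (x 1 + x 2) \<le> y 2 * 1" using ys xpos xs by (intro mult_left_mono) auto
    moreover have "y 3 * (x 1 + x 3) \<le> y 3 * 1" using ys xpos xs by (intro mult_left_mono) auto
    moreover have "y 1 * a + y 2 * a + y 3 * a = a" proof -
      have "y 1 * a + y 2 * a + y 3 * a = (y 1 + y 2 + y 3) * a" by (simp add: algebra_simps)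
      thus ?thesis using ys(4) by simp
    qed
    ultimately show ?thesis using xs ys by simp
  qed
  have disc_x: "disc_payoff {1,2,3} {1,2,3} gA abA l x y = v * PA x y / (l + (1-l) * PA x y)"
    if "y \<in> mixed_actions {1,2,3}" "0 < l" "l < 1" for y l
    using disc_formula[OF xm that] RP by simp
  have ev01: "eventually (\<lambda>l. 0 < l \<and> l < (1::real)) (at_right 0)"
    by (rule eventually_at_rightI[of 0 1]) auto
  have part5: "\<forall>j \<in> {1,2,3}. ((\<lambda>l. disc_payoff {1,2,3} {1,2,3} gA abA l x (pure j))
           \<longlongrightarrow> 1 + alphaA + alphaA ^ 2) (at_right 0)"
  proof
    fix j :: nat assume j: "j \<in> {1,2,3}"
    have pj: "pure j \<in> mixed_actions {1,2,3}" using j by (rule pure_mixed)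
    have P: "0 < PA x (pure j)" using PAlow[OF pj] ab by linarith
    have "eventually (\<lambda>l. v * PA x (pure j) / (l + (1-l) * PA x (pure j)) = disc_payoff {1,2,3} {1,2,3} gA abA l x (pure j)) (at_right 0)"
      using ev01 by eventually_elim (metis disc_x pj)
    from tendsto_cong[OF this] lim_aux[OF P, of v]
    show "((\<lambda>l. disc_payoff {1,2,3} {1,2,3} gA abA l x (pure j)) \<longlongrightarrow> 1 + alphaA + alphaA ^ 2) (at_right 0)"
      unfolding v_def a_def by simp
  qed
  define M where "M = mixed_actions {1,2,3}"
  have Mne: "M \<noteq> {}" using xm M_def by auto
  have bnds: "v * a / (l + (1-l) * a) \<le> disc_value {1,2,3} {1,2,3} gA abA l \<and> disc_value {1,2,3} {1,2,3} gA abA l \<le> v"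
    if l: "0 < l" "l < 1" for l
  proof -
    let ?f = "\<lambda>x' y. disc_payoff {1,2,3} {1,2,3} gA abA l x' y"
    have nonneg: "0 \<le> ?f x' y" if "x' \<in> M" "y \<in> M" for x' y
    proof -
      have "?f x' y = RA x' y / (l + (1-l) * PA x' y)" using disc_formula[of x' y l] that l M_def by simp
      moreover have "0 \<le> RA x' y" "0 \<le> PA x' y" using PR_bounds[of x' y] that M_def by auto
      moreover have "0 < l + (1-l) * PA x' y" using den_pos[OF l] \<open>0 \<le> PA x' y\<close> by blast
      ultimately show ?thesis by simp
    qed
    have bb: "bdd_below (?f x' ` M)" if "x' \<in> M" for x'
      using nonneg that by (intro bdd_belowI[of _ 0]) auto
    have infle: "(INF y\<in>M. ?f x' y) \<le> v" if xM: "x' \<in> M" for x'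
    proof -
      obtain j where j: "j \<in> {1,2,3}" and le: "RA x' (pure j) / (l + (1-l) * PA x' (pure j)) \<le> 1 + \<sigma>"
      proof -
        have xm': "x' \<in> mixed_actions {1,2,3}" using xM unfolding M_def .
        show ?thesis using upper_bound[OF xm' l sig sigb] that by blast
      qed
      have pj: "pure j \<in> M" using j pure_mixed M_def by auto
      show ?thesis
      proof (rule cINF_lower2[OF bb[OF xM] pj])
        show "?f x' (pure j) \<le> v" using disc_formula[of x' "pure j" l] xM pj M_def l le vs by simp
      qed
    qed
    have ba: "bdd_above ((\<lambda>x'. INF y\<in>M. ?f x' y) ` M)"
      using infle by (intro bdd_aboveI[of _ v]) auto
    have up: "disc_value {1,2,3} {1,2,3} gA abA l \<le> v"
      unfolding disc_value_def M_def[symmetric] using Mne infle by (intro cSUP_least) auto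
    have low: "v * a / (l + (1-l) * a) \<le> (INF y\<in>M. ?f x y)"
    proof (rule cINF_greatest[OF Mne])
      fix y assume y: "y \<in> M"
      have "v * a / (l + (1-l) * a) \<le> v * PA x y / (l + (1-l) * PA x y)"
        using PAlow[of y] y M_def ab l vs sigb by (intro frac_mono) auto
      thus "v * a / (l + (1-l) * a) \<le> ?f x y" using disc_x[of y l] y M_def l by simp
    qed
    have "(INF y\<in>M. ?f x y) \<le> disc_value {1,2,3} {1,2,3} gA abA l"
      unfolding disc_value_def M_def[symmetric] using ba xm M_def by (intro cSUP_upper) auto
    with up low show ?thesis by linarith
  qed
  have part6: "((\<lambda>l. disc_value {1,2,3} {1,2,3} gA abA l) \<longlongrightarrow> v) (at_right 0)"
  proof (rule tendsto_sandwich[where f="\<lambda>l. v * a / (l + (1-l) * a)" and h="\<lambda>l. v"])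
    show "eventually (\<lambda>l. v * a / (l + (1-l) * a) \<le> disc_value {1,2,3} {1,2,3} gA abA l) (at_right 0)"
      using ev01 by eventually_elim (use bnds in blast)
    show "eventually (\<lambda>l. disc_value {1,2,3} {1,2,3} gA abA l \<le> v) (at_right 0)"
      using ev01 by eventually_elim (use bnds in blast)
    show "((\<lambda>l. v * a / (l + (1-l) * a)) \<longlongrightarrow> v) (at_right 0)" using lim_aux[of a v] ab by simp
  qed (rule tendsto_const)
  have part6': "((\<lambda>l. disc_value {1,2,3} {1,2,3} gA abA l) \<longlongrightarrow> 1 + alphaA + alphaA ^ 2) (at_right 0)"
    using part6 unfolding v_def a_def .
  show ?thesis using xm part2 part3 part4 part5 part6' by blast
qed

end
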